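(* In $\mathbf{Sol}$ there exist geodesic triangles whose interior angle sum is larger than $\pi$, geodesic triangles whose interior angle sum is less than $\pi$, and geodesic triangles whose interior angle sum equals $\pi$.
   Context: $\mathbf{Sol}$ is $\mathbb{R}^3$ with coordinates $(x,y,z)$, with group law $(a,b,c)(x,y,z)=(x+ae^{-z},\,y+be^{z},\,z+c)$ and left-invariant Riemannian metric $ds^2=e^{2z}dx^2+e^{-2z}dy^2+dz^2$. A geodesic triangle consists of three points not on a common geodesic (vertices) and geodesic segments (sides) joining them pairwise; the interior angle at a vertex is the angle, measured with the Riemannian metric at that vertex, between the initial tangent vectors of the two sides issuing from that vertex. *)

theory Defs
  imports "HOL-Analysis.Analysis"
begin

type_synonym R3 = "real \<times> real \<times> real"

definition sol_inner :: "R3 \<Rightarrow> R3 \<Rightarrow> R3 \<Rightarrow> real" where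
  "sol_inner p v w =
     (case p of (x, y, z) \<Rightarrow> case v of (v1, v2, v3) \<Rightarrow> case w of (w1, w2, w3) \<Rightarrow>
        exp (2 * z) * v1 * w1 + exp (- 2 * z) * v2 * w2 + v3 * w3)"

text \<open>Geodesic equations of the metric (Euler-Lagrange / Levi-Civita):
  x'' = -2 z' x',  y'' = 2 z' y',  z'' = e^(2z) x'^2 - e^(-2z) y'^2.\<close>
definition sol_geodesic_acc :: "R3 \<Rightarrow> R3 \<Rightarrow> R3" where
  "sol_geodesic_acc p v =
     (case p of (x, y, z) \<Rightarrow> case v of (v1, v2, v3) \<Rightarrow>
        (- 2 * v1 * v3, 2 * v2 * v3, exp (2 * z) * v1 ^ 2 - exp (- 2 * z) * v2 ^ 2))"

definition sol_geodesic_on :: "(real \<Rightarrow> R3) \<Rightarrow> real \<Rightarrow> real \<Rightarrow> bool" where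
  "sol_geodesic_on c a b \<longleftrightarrow> a < b \<and>
     (\<exists>c' c''. \<forall>t\<in>{a..b}.
        (c has_vector_derivative c' t) (at t within {a..b}) \<and>
        (c' has_vector_derivative c'' t) (at t within {a..b}) \<and>
        c'' t = sol_geodesic_acc (c t) (c' t))"

definition sol_on_common_geodesic :: "R3 \<Rightarrow> R3 \<Rightarrow> R3 \<Rightarrow> bool" where
  "sol_on_common_geodesic A B C \<longleftrightarrow>
     (\<exists>c a b. sol_geodesic_on c a b \<and> A \<in> c ` {a..b} \<and> B \<in> c ` {a..b} \<and> C \<in> c ` {a..b})"

definition sol_angle :: "R3 \<Rightarrow> R3 \<Rightarrow> R3 \<Rightarrow> real" where
  "sol_angle p v w =
     arccos (sol_inner p v w / (sqrt (sol_inner p v v) * sqrt (sol_inner p w w)))"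

definition side_tangent :: "(real \<Rightarrow> R3) \<Rightarrow> real \<Rightarrow> R3" where
  "side_tangent g t = vector_derivative g (at t within {0..1})"

definition sol_geodesic_triangle ::
  "R3 \<Rightarrow> R3 \<Rightarrow> R3 \<Rightarrow> (real \<Rightarrow> R3) \<Rightarrow> (real \<Rightarrow> R3) \<Rightarrow> (real \<Rightarrow> R3) \<Rightarrow> bool" where
  "sol_geodesic_triangle A B C g1 g2 g3 \<longleftrightarrow>
     distinct [A, B, C] \<and> \<not> sol_on_common_geodesic A B C \<and>
     sol_geodesic_on g1 0 1 \<and> g1 0 = A \<and> g1 1 = B \<and>
     sol_geodesic_on g2 0 1 \<and> g2 0 = B \<and> g2 1 = C \<and>
     sol_geodesic_on g3 0 1 \<and> g3 0 = C \<and> g3 1 = A"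

text \<open>Sum of interior angles: at each vertex, the angle between the initial tangent
  vectors of the two sides issuing from it (a side ending at the vertex is traversed backwards).\<close>
definition sol_angle_sum ::
  "R3 \<Rightarrow> R3 \<Rightarrow> R3 \<Rightarrow> (real \<Rightarrow> R3) \<Rightarrow> (real \<Rightarrow> R3) \<Rightarrow> (real \<Rightarrow> R3) \<Rightarrow> real" where
  "sol_angle_sum A B C g1 g2 g3 =
     sol_angle A (side_tangent g1 0) (- side_tangent g3 1) +
     sol_angle B (side_tangent g2 0) (- side_tangent g1 1) +
     sol_angle C (side_tangent g3 0) (- side_tangent g2 1)"

end

theory Submission
  imports Defs
begin


lemma vd_real: "((f::real\<Rightarrow>real) has_field_derivative d) F \<Longrightarrow> (f has_vector_derivative d) F"
  using has_real_derivative_iff_has_vector_derivative by blast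

lemma geod_components:
  fixes X Y Z X' Y' Z' X'' Y'' Z'' :: "real \<Rightarrow> real"
  assumes "\<And>t. (X has_field_derivative X' t) (at t)"
    "\<And>t. (Y has_field_derivative Y' t) (at t)"
    "\<And>t. (Z has_field_derivative Z' t) (at t)"
    "\<And>t. (X' has_field_derivative X'' t) (at t)"
    "\<And>t. (Y' has_field_derivative Y'' t) (at t)"
    "\<And>t. (Z' has_field_derivative Z'' t) (at t)"
    "\<And>t. (X'' t, Y'' t, Z'' t) = sol_geodesic_acc (X t, Y t, Z t) (X' t, Y' t, Z' t)"
  shows "sol_geodesic_on (\<lambda>t. (X t, Y t, Z t)) 0 1"
    and "side_tangent (\<lambda>t. (X t, Y t, Z t)) 0 = (X' 0, Y' 0, Z' 0)"
    and "side_tangent (\<lambda>t. (X t, Y t, Z t)) 1 = (X' 1, Y' 1, Z' 1)"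
proof -
  have D1: "((\<lambda>t. (X t, Y t, Z t)) has_vector_derivative (X' t, Y' t, Z' t)) (at t within S)" for t S
    by (intro has_vector_derivative_Pair vd_real; rule has_field_derivative_at_within; rule assms)
  have D2: "((\<lambda>t. (X' t, Y' t, Z' t)) has_vector_derivative (X'' t, Y'' t, Z'' t)) (at t within S)" for t S
    by (intro has_vector_derivative_Pair vd_real; rule has_field_derivative_at_within; rule assms)
  show "sol_geodesic_on (\<lambda>t. (X t, Y t, Z t)) 0 1"
    unfolding sol_geodesic_on_def
  proof (intro conjI exI ballI)
    fix t :: real assume "t \<in> {0..1}"
    show "((\<lambda>t. (X t, Y t, Z t)) has_vector_derivative (X' t, Y' t, Z' t)) (at t within {0..1})" by (rule D1)
    show "((\<lambda>t. (X' t, Y' t, Z' t)) has_vector_derivative (X'' t, Y'' t, Z'' t)) (at t within {0..1})" by (rule D2)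
    show "(X'' t, Y'' t, Z'' t) = sol_geodesic_acc (X t, Y t, Z t) (X' t, Y' t, Z' t)" by (rule assms(7))
  qed simp
  show "side_tangent (\<lambda>t. (X t, Y t, Z t)) 0 = (X' 0, Y' 0, Z' 0)"
    unfolding side_tangent_def
    using vector_derivative_within_cbox[of 0 1 0, OF _ _ D1] by simp
  show "side_tangent (\<lambda>t. (X t, Y t, Z t)) 1 = (X' 1, Y' 1, Z' 1)"
    unfolding side_tangent_def
    using vector_derivative_within_cbox[of 0 1 1, OF _ _ D1] by simp
qed



lemma tanh_sq_lt1: "tanh (x::real) ^ 2 < 1"
  using tanh_real_bounds[of x] by (simp add: abs_square_less_1 abs_less_iff)

lemma arc_y:
  fixes xc yc R sa d :: real
  assumes R: "R > 0"
  defines "g \<equiv> \<lambda>t. (xc + R * tanh (sa + d * t), yc, - ln (1 - tanh (sa + d * t) ^ 2) / 2 - ln R)"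
  shows "sol_geodesic_on g 0 1"
    "side_tangent g 0 = (R * d * (1 - tanh sa ^ 2), 0, d * tanh sa)"
    "side_tangent g 1 = (R * d * (1 - tanh (sa + d) ^ 2), 0, d * tanh (sa + d))"
proof -
  define T where "T t = tanh (sa + d * t)" for t
  have T1: "1 - T t ^ 2 > 0" for t using tanh_sq_lt1 unfolding T_def by simp
  have dT: "(T has_field_derivative d * (1 - T t ^ 2)) (at t)" for t
    unfolding T_def by (auto intro!: derivative_eq_intros simp: algebra_simps)
  have g: "g = (\<lambda>t. (xc + R * T t, yc, - ln (1 - T t ^ 2) / 2 - ln R))"
    unfolding g_def T_def by simp
  have ex: "exp (2 * (- ln (1 - T t ^ 2) / 2 - ln R)) = 1 / ((1 - T t ^ 2) * R^2)" for t
  proof -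
    have "exp (2 * (- ln (1 - T t ^ 2) / 2 - ln R)) = inverse (exp (ln (1 - T t ^ 2)) * exp (ln R) * exp (ln R))"
      by (simp add: exp_minus[symmetric] exp_add[symmetric] algebra_simps)
    also have "\<dots> = 1 / ((1 - T t ^ 2) * R^2)" using T1[of t] R by (simp add: power2_eq_square field_simps)
    finally show ?thesis .
  qed
  note G = geod_components[where X="\<lambda>t. xc + R * T t" and Y="\<lambda>t. yc" and Z="\<lambda>t. - ln (1 - T t ^ 2) / 2 - ln R"
     and X'="\<lambda>t. R * d * (1 - T t ^ 2)" and Y'="\<lambda>t. 0" and Z'="\<lambda>t. d * T t"
     and X''="\<lambda>t. - 2 * R * d^2 * T t * (1 - T t ^ 2)" and Y''="\<lambda>t. 0" and Z''="\<lambda>t. d^2 * (1 - T t ^ 2)"]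
  have a1: "((\<lambda>t. xc + R * T t) has_field_derivative R * d * (1 - T t ^ 2)) (at t)" for t
    by (auto intro!: derivative_eq_intros dT simp: algebra_simps)
  have a3: "((\<lambda>t. - ln (1 - T t ^ 2) / 2 - ln R) has_field_derivative d * T t) (at t)" for t
    using T1[of t] by (auto intro!: derivative_eq_intros dT simp: field_simps power2_eq_square)
  have a4: "((\<lambda>t. R * d * (1 - T t ^ 2)) has_field_derivative - 2 * R * d^2 * T t * (1 - T t ^ 2)) (at t)" for t
    by (auto intro!: derivative_eq_intros dT simp: algebra_simps power2_eq_square)
  have a6: "((\<lambda>t. d * T t) has_field_derivative d^2 * (1 - T t ^ 2)) (at t)" for t
    by (auto intro!: derivative_eq_intros dT simp: algebra_simps power2_eq_square)
  have a7: "(- 2 * R * d^2 * T t * (1 - T t ^ 2), 0, d^2 * (1 - T t ^ 2)) =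
      sol_geodesic_acc (xc + R * T t, yc, - ln (1 - T t ^ 2) / 2 - ln R) (R * d * (1 - T t ^ 2), 0, d * T t)" for t
  proof -
    have "exp (2 * (- ln (1 - T t ^ 2) / 2 - ln R)) * (R * d * (1 - T t ^ 2))^2 = d^2 * (1 - T t ^ 2)"
      unfolding ex using T1[of t] R by (simp add: field_simps power2_eq_square)
    then show ?thesis unfolding sol_geodesic_acc_def by (simp add: algebra_simps power2_eq_square)
  qed
  show "sol_geodesic_on g 0 1"
    "side_tangent g 0 = (R * d * (1 - tanh sa ^ 2), 0, d * tanh sa)"
    "side_tangent g 1 = (R * d * (1 - tanh (sa + d) ^ 2), 0, d * tanh (sa + d))"
    using G[OF a1 _ a3 a4 _ a6 a7] unfolding g by (auto simp: T_def)
qed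


lemma arc_x:
  fixes xc yc R sa d :: real
  assumes R: "R > 0"
  defines "g \<equiv> \<lambda>t. (xc, yc + R * tanh (sa + d * t), ln R + ln (1 - tanh (sa + d * t) ^ 2) / 2)"
  shows "sol_geodesic_on g 0 1"
    "side_tangent g 0 = (0, R * d * (1 - tanh sa ^ 2), - d * tanh sa)"
    "side_tangent g 1 = (0, R * d * (1 - tanh (sa + d) ^ 2), - d * tanh (sa + d))"
proof -
  define T where "T t = tanh (sa + d * t)" for t
  have T1: "1 - T t ^ 2 > 0" for t using tanh_sq_lt1 unfolding T_def by simp
  have dT: "(T has_field_derivative d * (1 - T t ^ 2)) (at t)" for t
    unfolding T_def by (auto intro!: derivative_eq_intros simp: algebra_simps)
  have g: "g = (\<lambda>t. (xc, yc + R * T t, ln R + ln (1 - T t ^ 2) / 2))"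
    unfolding g_def T_def by simp
  have ex: "exp (- 2 * (ln R + ln (1 - T t ^ 2) / 2)) = 1 / ((1 - T t ^ 2) * R^2)" for t
  proof -
    have "exp (- 2 * (ln R + ln (1 - T t ^ 2) / 2)) = inverse (exp (ln (1 - T t ^ 2)) * exp (ln R) * exp (ln R))"
      by (simp add: exp_minus[symmetric] exp_add[symmetric] algebra_simps)
    also have "\<dots> = 1 / ((1 - T t ^ 2) * R^2)" using T1[of t] R by (simp add: power2_eq_square field_simps)
    finally show ?thesis .
  qed
  note G = geod_components[where X="\<lambda>t. xc" and Y="\<lambda>t. yc + R * T t" and Z="\<lambda>t. ln R + ln (1 - T t ^ 2) / 2"
     and X'="\<lambda>t. 0" and Y'="\<lambda>t. R * d * (1 - T t ^ 2)" and Z'="\<lambda>t. - d * T t"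
     and X''="\<lambda>t. 0" and Y''="\<lambda>t. - 2 * R * d^2 * T t * (1 - T t ^ 2)" and Z''="\<lambda>t. - (d^2 * (1 - T t ^ 2))"]
  have a2: "((\<lambda>t. yc + R * T t) has_field_derivative R * d * (1 - T t ^ 2)) (at t)" for t
    by (auto intro!: derivative_eq_intros dT simp: algebra_simps)
  have a3: "((\<lambda>t. ln R + ln (1 - T t ^ 2) / 2) has_field_derivative - d * T t) (at t)" for t
    using T1[of t] by (auto intro!: derivative_eq_intros dT simp: field_simps power2_eq_square)
  have a5: "((\<lambda>t. R * d * (1 - T t ^ 2)) has_field_derivative - 2 * R * d^2 * T t * (1 - T t ^ 2)) (at t)" for t
    by (auto intro!: derivative_eq_intros dT simp: algebra_simps power2_eq_square)
  have a6: "((\<lambda>t. - d * T t) has_field_derivative - (d^2 * (1 - T t ^ 2))) (at t)" for t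
    by (auto intro!: derivative_eq_intros dT simp: algebra_simps power2_eq_square)
  have a7: "(0, - 2 * R * d^2 * T t * (1 - T t ^ 2), - (d^2 * (1 - T t ^ 2))) =
      sol_geodesic_acc (xc, yc + R * T t, ln R + ln (1 - T t ^ 2) / 2) (0, R * d * (1 - T t ^ 2), - d * T t)" for t
  proof -
    have "exp (- 2 * (ln R + ln (1 - T t ^ 2) / 2)) * (R * d * (1 - T t ^ 2))^2 = d^2 * (1 - T t ^ 2)"
      unfolding ex using T1[of t] R by (simp add: field_simps power2_eq_square)
    then show ?thesis unfolding sol_geodesic_acc_def by (simp add: algebra_simps power2_eq_square)
  qed
  show "sol_geodesic_on g 0 1"
    "side_tangent g 0 = (0, R * d * (1 - tanh sa ^ 2), - d * tanh sa)"
    "side_tangent g 1 = (0, R * d * (1 - tanh (sa + d) ^ 2), - d * tanh (sa + d))"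
    using G[OF _ a2 a3 _ a5 a6 a7] unfolding g by (auto simp: T_def)
qed



definition Pt :: "real \<Rightarrow> real" where "Pt t = t^4 - 6*t^3 + 6*t^2 - 6*t + 1"

lemma arccos_in_0_pi2:
  assumes "0 < y" "y < 1" shows "0 < arccos y" "arccos y < pi/2"
proof -
  show "0 < arccos y" using arccos_lt_bounded[of y] assms by auto
  have "arccos y \<le> pi/2" using arccos_le_pi2[of y] assms by auto
  moreover have "arccos y \<noteq> pi/2" using cos_arccos[of y] assms by force
  ultimately show "arccos y < pi/2" by simp
qed

lemma angle_sum_sign:
  fixes t :: real
  assumes t: "t > 0"
  defines "cA \<equiv> 1 / (sqrt 2 * sqrt (1 + (t/2)^2))"
    and "cB \<equiv> 1 / (sqrt (1 + (1/(2*t))^2) * sqrt 2)"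
    and "cC \<equiv> - ((1 - t/2) * (1 - 1/(2*t))) / (sqrt (1 + (1 - t/2)^2 / t) * sqrt (1 + (1 - 1/(2*t))^2 * t))"
  defines "S \<equiv> arccos cA + arccos cB + arccos cC"
  shows "Pt t < 0 \<Longrightarrow> S > pi" "Pt t > 0 \<Longrightarrow> S < pi" "Pt t = 0 \<Longrightarrow> S = pi"
proof -
  define D where "D = sqrt ((4 + t^2) * (4*t^2 + 1))"
  define M where "M = sqrt ((2 + t^2) * (2*t^2 + 1))"
  define K where "K = 2*t^2 - 3*t + 2"
  have Dpos: "D > 0" unfolding D_def using t by (simp add: add_pos_pos)
  have M0: "M \<ge> 0" unfolding M_def by simp
  have Kpos: "K > 0" unfolding K_def
  proof -
    have "2*t^2 - 3*t + 2 = 2*(t - 3/4)^2 + 7/8" by (simp add: power2_eq_square algebra_simps)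
    also have "\<dots> > 0" by (simp add: add_nonneg_pos)
    finally show "2*t^2 - 3*t + 2 > 0" .
  qed
  have M2: "M^2 = (2 + t^2) * (2*t^2 + 1)" unfolding M_def
    by (rule real_sqrt_pow2) (simp add: add_pos_nonneg)
  have KM: "K^2 - M^2 = 2 * Pt t" unfolding M2 unfolding K_def Pt_def
    by (simp add: power2_eq_square algebra_simps power4_eq_xxxx power3_eq_cube)
  have pos1: "4 + t^2 > 0" "8 + 2*t^2 > 0" "4*t^2+1 > 0" "1 + 4*t^2 > 0" "2 + 8*t^2 > 0" "8*t^2 + 2 > 0" "2*t^2+1>0" "2+t^2 > 0"
    by (simp_all add: add_pos_nonneg add_nonneg_pos)
  have cApos: "cA > 0" unfolding cA_def by (simp add: add_pos_nonneg)
  have cBpos: "cB > 0" unfolding cB_def by (simp add: add_pos_nonneg)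
  have cA2: "cA^2 = 2 / (4 + t^2)" unfolding cA_def
    using pos1 by (simp add: power_divide power_mult_distrib field_simps)
  have cB2: "cB^2 = 2*t^2 / (4*t^2 + 1)" unfolding cB_def using t pos1
    by (simp add: power_divide power_mult_distrib field_simps)
  have cA1: "cA < 1"
  proof -
    have "cA^2 < 1^2" unfolding cA2 by (simp add: add_pos_nonneg)
    then show ?thesis using cApos by (smt (verit) power_mono)
  qed
  have cB1: "cB < 1"
  proof -
    have "cB^2 < 1^2" unfolding cB2 using t pos1 by (simp add: field_simps)
    then show ?thesis using cBpos by (smt (verit) power_mono)
  qed
  have cAB: "cA * cB = 2*t / D"
  proof (rule power2_eq_imp_eq)
    show "(cA * cB)^2 = (2*t/D)^2" unfolding power_mult_distrib cA2 cB2 D_def power_divide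
      using t by (simp add: field_simps)
  qed (use cApos cBpos t Dpos in auto)
  have sAB: "sqrt (1 - cA^2) * sqrt (1 - cB^2) = M / D"
  proof -
    have "(1 - cA^2) * (1 - cB^2) = ((2 + t^2) * (2*t^2 + 1)) / ((4 + t^2) * (4*t^2 + 1))"
    proof -
      have e1: "1 - 2 / (4 + t^2) = (2 + t^2) / (4 + t^2)" using pos1 by (simp add: field_simps)
      have e2: "1 - 2*t^2 / (4*t^2 + 1) = (2*t^2 + 1) / (4*t^2 + 1)" using pos1 by (simp add: field_simps)
      show ?thesis unfolding cA2 cB2 e1 e2 by simp
    qed
    then show ?thesis unfolding M_def D_def by (simp add: real_sqrt_mult[symmetric] real_sqrt_divide)
  qed
  have cCval: "cC = - ((2 - t) * (2*t - 1)) / D"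
  proof -
    have "(1 + (1 - t/2)^2 / t) * (1 + (1 - 1/(2*t))^2 * t) = ((4 + t^2) * (4*t^2 + 1)) / (4*t)^2"
      using t by (simp add: field_simps power2_eq_square)
    then have "sqrt (1 + (1 - t/2)^2 / t) * sqrt (1 + (1 - 1/(2*t))^2 * t) = D / (4*t)"
    proof -
      have s16: "sqrt (16 * t^2) = 4*t"
      proof -
        have "sqrt 16 = (4::real)" by (rule real_sqrt_unique) simp_all
        then show ?thesis using t by (simp add: real_sqrt_mult)
      qed
      show ?thesis using \<open>(1 + (1 - t/2)^2 / t) * (1 + (1 - 1/(2*t))^2 * t) = _\<close>
        unfolding D_def using t by (simp add: real_sqrt_mult[symmetric] real_sqrt_divide s16)
    qed
    then show ?thesis unfolding cC_def using t Dpos by (simp add: field_simps)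
  qed
  have cCb: "cC^2 \<le> 1"
  proof -
    have "((2 - t) * (2*t - 1))^2 \<le> (4 + t^2) * (4*t^2 + 1)"
    proof -
      have "(4 + t^2) * (4*t^2 + 1) - ((2 - t) * (2*t - 1))^2 = 4*t*(5*t^2 - 4*t + 5)"
        by (simp add: power2_eq_square algebra_simps)
      moreover have "5*t^2 - 4*t + 5 > 0"
      proof -
        have "5*t^2 - 4*t + 5 = 5*(t - 2/5)^2 + 21/5" by (simp add: power2_eq_square algebra_simps)
        moreover have "(t - 2/5)^2 \<ge> 0" by simp
        ultimately show ?thesis by linarith
      qed
      ultimately show ?thesis using t by (smt (verit) mult_pos_pos)
    qed
    moreover have "D^2 = (4 + t^2) * (4*t^2 + 1)" unfolding D_def by (simp add: add_pos_pos)
    ultimately show ?thesis unfolding cCval power_divide using Dpos pos1 by (simp add: divide_le_eq_1)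
  qed
  then have cCm: "-1 \<le> cC" "cC \<le> 1" using abs_le_square_iff[of cC 1] by auto
  define a where "a = arccos cA"
  define b where "b = arccos cB"
  define c where "c = arccos cC"
  define d where "d = pi - (a + b)"
  have a: "0 < a" "a < pi/2" unfolding a_def using arccos_in_0_pi2 cApos cA1 by auto
  have b: "0 < b" "b < pi/2" unfolding b_def using arccos_in_0_pi2 cBpos cB1 by auto
  have c: "0 \<le> c" "c \<le> pi" unfolding c_def using arccos_bounded cCm by auto
  have d: "0 \<le> d" "d \<le> pi" unfolding d_def using a b by auto
  have cosd: "cos d = (M - 2*t) / D"
  proof -
    have "cos d = sin a * sin b - cos a * cos b" unfolding d_def by (simp add: cos_add)
    also have "\<dots> = sqrt (1 - cA^2) * sqrt (1 - cB^2) - cA * cB"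
      unfolding a_def b_def using cApos cA1 cBpos cB1 by (simp add: sin_arccos)
    finally show ?thesis unfolding sAB cAB by (simp add: diff_divide_distrib)
  qed
  have cosc: "cos c = cC" unfolding c_def using cCm by simp
  have diff: "cos c - cos d = (K - M) / D"
  proof -
    have "cos c - cos d = (- ((2 - t) * (2*t - 1)) - (M - 2*t)) / D"
      unfolding cosc cosd cCval by (simp add: diff_divide_distrib)
    also have "- ((2 - t) * (2*t - 1)) - (M - 2*t) = K - M" unfolding K_def by (simp add: power2_eq_square algebra_simps)
    finally show ?thesis .
  qed
  have S: "S = pi - d + c" unfolding S_def d_def a_def b_def c_def by simp
  show "Pt t < 0 \<Longrightarrow> S > pi"
  proof -
    assume "Pt t < 0"
    then have "K^2 < M^2" using KM by simp
    then have "K < M" using M0 Kpos by (smt (verit) power_mono)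
    then have "(K - M) / D < 0" using Dpos by (simp add: divide_neg_pos)
    then have "cos c < cos d" using diff by linarith
    then have "d < c" using cos_mono_less_eq[of c d] c d by simp
    then show ?thesis unfolding S by simp
  qed
  show "Pt t > 0 \<Longrightarrow> S < pi"
  proof -
    assume "Pt t > 0"
    then have "M^2 < K^2" using KM by simp
    then have "M < K" using M0 Kpos by (smt (verit) power_mono)
    then have "(K - M) / D > 0" using Dpos by simp
    then have "cos d < cos c" using diff by linarith
    then have "c < d" using cos_mono_less_eq[of d c] c d by simp
    then show ?thesis unfolding S by simp
  qed
  show "Pt t = 0 \<Longrightarrow> S = pi"
  proof -
    assume "Pt t = 0"
    then have "M^2 = K^2" using KM by simp
    then have "M = K" using M0 Kpos by (simp add: power2_eq_iff_nonneg)
    then have "cos c = cos d" using diff by simp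
    then have "c = d" using cos_inj_pi[of c d] c d by simp
    then show ?thesis unfolding S by simp
  qed
qed



lemma tanh_artanh: "\<bar>y::real\<bar> < 1 \<Longrightarrow> tanh (artanh y) = y"
proof -
  assume y: "\<bar>y\<bar> < 1"
  define Q where "Q = (1 + y) / (1 - y)"
  have Q: "Q > 0" unfolding Q_def using y by (simp add: abs_less_iff)
  have "exp (- 2 * artanh y) = 1 / Q" unfolding artanh_def Q_def[symmetric]
    using Q by (simp add: exp_minus inverse_eq_divide)
  then have "tanh (artanh y) = (1 - 1/Q) / (1 + 1/Q)" by (simp add: tanh_real_altdef)
  also have "\<dots> = y" unfolding Q_def using y by (simp add: abs_less_iff field_simps)
  finally show ?thesis .
qed

lemma endpt:
  fixes q u :: real
  assumes u: "u > 0" and R: "R = sqrt (q^2 + u^2)"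
  shows "R > 0" "tanh (artanh (q/R)) = q/R" "1 - tanh (artanh (q/R)) ^ 2 = u^2 / R^2"
proof -
  have R2: "R^2 = q^2 + u^2" unfolding R by simp
  show Rp: "R > 0" unfolding R using u by (simp add: add_nonneg_pos)
  have "\<bar>q/R\<bar> < 1"
  proof -
    have "q^2 < R^2" using R2 u by simp
    then have "\<bar>q\<bar> < \<bar>R\<bar>" using abs_le_square_iff[of R q] by (simp add: not_le[symmetric])
    then show ?thesis using Rp by simp
  qed
  then show t: "tanh (artanh (q/R)) = q/R" by (rule tanh_artanh)
  show "1 - tanh (artanh (q/R)) ^ 2 = u^2 / R^2" unfolding t using Rp R2 u
    by (simp add: power_divide diff_divide_eq_iff add_nonneg_pos)
qed


lemma sol_inner_scale1: "sol_inner p (c *\<^sub>R v) w = c * sol_inner p v w"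
  by (cases p; cases v; cases w) (simp add: sol_inner_def algebra_simps)
lemma sol_inner_scale2: "sol_inner p v (c *\<^sub>R w) = c * sol_inner p v w"
  by (cases p; cases v; cases w) (simp add: sol_inner_def algebra_simps)

lemma sqrt_scale: "c > 0 \<Longrightarrow> sqrt (c * (c * x)) = c * sqrt x"
  by (simp add: real_sqrt_mult mult.assoc[symmetric] power2_eq_square[symmetric])

lemma sol_angle_scale1: "c > 0 \<Longrightarrow> sol_angle p (c *\<^sub>R v) w = sol_angle p v w"
  unfolding sol_angle_def sol_inner_scale1 sol_inner_scale2 by (simp add: sqrt_scale)
lemma sol_angle_scale2: "c > 0 \<Longrightarrow> sol_angle p v (c *\<^sub>R w) = sol_angle p v w"
  unfolding sol_angle_def sol_inner_scale1 sol_inner_scale2 by (simp add: sqrt_scale)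

lemma zend_y: "(R::real) > 0 \<Longrightarrow> u > 0 \<Longrightarrow> - ln (u^2 / R^2) / 2 - ln R = - ln u"
  by (simp add: ln_div ln_realpow diff_divide_distrib)
lemma zend_x: "(R::real) > 0 \<Longrightarrow> u > 0 \<Longrightarrow> ln R + ln (u^2 / R^2) / 2 = ln u"
  by (simp add: ln_div ln_realpow diff_divide_distrib)

lemma vd_fst: "(f has_vector_derivative v) F \<Longrightarrow> ((\<lambda>x. fst (f x)) has_real_derivative fst v) F"
  unfolding has_vector_derivative_def has_field_derivative_def
  by (drule has_derivative_fst) (simp add: mult.commute[of _ "fst v"])
lemma vd_snd: "(f has_vector_derivative v) F \<Longrightarrow> ((\<lambda>x. snd (f x)) has_vector_derivative snd v) F"
  unfolding has_vector_derivative_def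
  by (drule has_derivative_snd) simp

lemma vd_snd2: "(f has_vector_derivative v) F \<Longrightarrow> ((\<lambda>x. snd (snd (f x))) has_real_derivative snd (snd v)) F"
  unfolding has_vector_derivative_def has_field_derivative_def
  by (drule has_derivative_snd, drule has_derivative_snd) (simp add: mult.commute[of _ "snd (snd v)"])

lemma acc_fst: "fst (sol_geodesic_acc p v) = - 2 * fst v * snd (snd v)"
  by (cases p; cases v) (simp add: sol_geodesic_acc_def)

lemma not_common:
  assumes "fst A = fst C" "A \<noteq> C" "fst B \<noteq> fst A"
  shows "\<not> sol_on_common_geodesic A B C"
proof
  assume "sol_on_common_geodesic A B C"
  then obtain c a b where geo: "sol_geodesic_on c a b" and A: "A \<in> c ` {a..b}" and B: "B \<in> c ` {a..b}"
    and C: "C \<in> c ` {a..b}" unfolding sol_on_common_geodesic_def by blast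
  from geo obtain c' c'' where ab: "a < b" and H: "\<And>t. t \<in> {a..b} \<Longrightarrow>
        (c has_vector_derivative c' t) (at t within {a..b}) \<and>
        (c' has_vector_derivative c'' t) (at t within {a..b}) \<and>
        c'' t = sol_geodesic_acc (c t) (c' t)" unfolding sol_geodesic_on_def by blast
  define X where "X t = fst (c t)" for t
  define Z where "Z t = snd (snd (c t))" for t
  define X1 where "X1 t = fst (c' t)" for t
  define Z1 where "Z1 t = snd (snd (c' t))" for t
  define X2 where "X2 t = fst (c'' t)" for t
  have dX: "(X has_real_derivative X1 t) (at t within {a..b})" if "t \<in> {a..b}" for t
    unfolding X_def X1_def using H[OF that] by (auto intro: vd_fst)
  have dZ: "(Z has_real_derivative Z1 t) (at t within {a..b})" if "t \<in> {a..b}" for t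
    unfolding Z_def Z1_def using H[OF that] by (auto intro: vd_snd2)
  have dX1: "(X1 has_real_derivative X2 t) (at t within {a..b})" if "t \<in> {a..b}" for t
    unfolding X2_def X1_def using H[OF that] by (auto intro: vd_fst)
  have X2: "X2 t = - 2 * X1 t * Z1 t" if "t \<in> {a..b}" for t
    unfolding X2_def X1_def Z1_def using H[OF that] by (simp add: acc_fst)
  define Phi where "Phi t = exp (2 * Z t) * X1 t" for t
  have dPhi: "(Phi has_derivative (\<lambda>h. 0)) (at t within {a..b})" if "t \<in> {a..b}" for t
  proof -
    have "(Phi has_real_derivative exp (2 * Z t) * (2 * Z1 t) * X1 t + exp (2 * Z t) * X2 t) (at t within {a..b})"
      unfolding Phi_def by (auto intro!: derivative_eq_intros dX dZ dX1 that)
    moreover have "exp (2 * Z t) * (2 * Z1 t) * X1 t + exp (2 * Z t) * X2 t = 0"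
      using X2[OF that] by (simp add: algebra_simps)
    ultimately have "(Phi has_real_derivative 0) (at t within {a..b})" by simp
    moreover have "((*) (0::real)) = (\<lambda>h. 0)" by auto
    ultimately show ?thesis unfolding has_field_derivative_def by metis
  qed
  obtain K where K: "\<And>t. t \<in> {a..b} \<Longrightarrow> Phi t = K"
    using has_derivative_zero_constant[of "{a..b}" Phi] dPhi by auto
  obtain tA where tA: "tA \<in> {a..b}" "A = c tA" using A by auto
  obtain tB where tB: "tB \<in> {a..b}" "B = c tB" using B by auto
  obtain tC where tC: "tC \<in> {a..b}" "C = c tC" using C by auto
  have cont: "continuous_on {a..b} X"
    using dX by (meson DERIV_continuous continuous_on_eq_continuous_within)
  have rolle: "\<exists>s\<in>{a..b}. X1 s = 0" if "t1 \<in> {a..b}" "t2 \<in> {a..b}" "t1 < t2" "X t1 = X t2" for t1 t2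
  proof -
    have "\<exists>z. t1 < z \<and> z < t2 \<and> (\<lambda>v. X1 z * v) = (\<lambda>v. 0)"
    proof (rule Rolle_deriv[OF that(3,4)])
      show "continuous_on {t1..t2} X" using cont that by (auto elim: continuous_on_subset)
      fix x assume x: "t1 < x" "x < t2"
      then have "a < x" "x < b" using that by auto
      then have "(X has_real_derivative X1 x) (at x)" using dX[of x] at_within_Icc_at[of a x b] by simp
      then show "(X has_derivative (\<lambda>v. X1 x * v)) (at x)" by (simp add: has_field_derivative_def)
    qed
    then obtain z where "t1 < z" "z < t2" "(\<lambda>v. X1 z * v) = (\<lambda>v. 0)" by blast
    then have "X1 z = 0" by (metis mult_cancel_left1)
    then show ?thesis using \<open>t1 < z\<close> \<open>z < t2\<close> that by auto
  qed
  have "tA \<noteq> tC" using tA tC assms(2) by auto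
  moreover have "X tA = X tC" using tA tC assms(1) unfolding X_def by simp
  ultimately obtain s where s: "s \<in> {a..b}" "X1 s = 0"
    using rolle[of tA tC] rolle[of tC tA] tA tC by (cases "tA < tC") auto
  have "K = 0" using K[OF s(1)] s(2) unfolding Phi_def by simp
  then have X1z: "X1 t = 0" if "t \<in> {a..b}" for t using K[OF that] unfolding Phi_def by simp
  then have "(X has_derivative (\<lambda>h. 0)) (at t within {a..b})" if "t \<in> {a..b}" for t
  proof -
    have "(X has_real_derivative 0) (at t within {a..b})" using dX[OF that] X1z[OF that] by simp
    moreover have "((*) (0::real)) = (\<lambda>h. 0)" by auto
    ultimately show ?thesis unfolding has_field_derivative_def by metis
  qed
  then obtain L where "\<And>t. t \<in> {a..b} \<Longrightarrow> X t = L"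
    using has_derivative_zero_constant[of "{a..b}" X] by auto
  then have "X tA = X tB" using tA tB by simp
  then show False using tA tB assms(3) unfolding X_def by simp
qed



lemma angA: "sol_angle (0,0,0) (1,1,0) (0,1,t/2) = arccos (1 / (sqrt 2 * sqrt (1 + (t/2)^2)))"
  unfolding sol_angle_def sol_inner_def by (simp add: power2_eq_square)

lemma angB: "sol_angle (1,1,0) (-1,0,-(1/(2*t))) (-1,-1,0) = arccos (1 / (sqrt (1 + (1/(2*t))^2) * sqrt 2))"
  unfolding sol_angle_def sol_inner_def by (simp add: power2_eq_square)

lemma angC:
  assumes t: "t > 0"
  shows "sol_angle (0,1,ln (sqrt t)) (0, - sqrt t, (1 - t/2) / sqrt t) (1 / sqrt t, 0, - (1 - 1/(2*t)) * sqrt t)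
     = arccos (- ((1 - t/2) * (1 - 1/(2*t))) / (sqrt (1 + (1 - t/2)^2 / t) * sqrt (1 + (1 - 1/(2*t))^2 * t)))"
proof -
  have e1: "exp (2 * ln (sqrt t)) = t" using t by (simp add: exp_ln_iff ln_sqrt)
  have e2: "exp (- 2 * ln (sqrt t)) = 1 / t" using t by (simp add: ln_sqrt exp_minus inverse_eq_divide)
  obtain r where r: "r = sqrt t" by blast
  have rp: "r > 0" using r t by simp
  have tr: "t = r * r" using r t by simp
  have i1: "exp (2 * ln (sqrt t)) * 0 * (1 / sqrt t) + exp (- 2 * ln (sqrt t)) * - sqrt t * 0 + (1 - t/2) / sqrt t * (- (1 - 1/(2*t)) * sqrt t)
     = - ((1 - t/2) * (1 - 1/(2*t)))" using t by (simp add: field_simps)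
  have i2: "exp (2 * ln (sqrt t)) * 0 * 0 + exp (- 2 * ln (sqrt t)) * - sqrt t * - sqrt t + (1 - t/2) / sqrt t * ((1 - t/2) / sqrt t)
     = 1 + (1 - t/2)^2 / t" unfolding e1 e2 unfolding r[symmetric] tr using rp by (simp add: field_simps power2_eq_square)
  have i3: "exp (2 * ln (sqrt t)) * (1 / sqrt t) * (1 / sqrt t) + exp (- 2 * ln (sqrt t)) * 0 * 0 + (- (1 - 1/(2*t)) * sqrt t) * (- (1 - 1/(2*t)) * sqrt t)
     = 1 + (1 - 1/(2*t))^2 * t" unfolding e1 e2 unfolding r[symmetric] tr using rp by (simp add: field_simps power2_eq_square)
  show ?thesis unfolding sol_angle_def sol_inner_def prod.case i1 i2 i3 ..
qed


lemma triangle: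
  fixes t :: real
  assumes t: "t > 0"
  shows "\<exists>A B C g1 g2 g3. sol_geodesic_triangle A B C g1 g2 g3 \<and>
     sol_angle_sum A B C g1 g2 g3 = arccos (1 / (sqrt 2 * sqrt (1 + (t/2)^2))) + arccos (1 / (sqrt (1 + (1/(2*t))^2) * sqrt 2))
       + arccos (- ((1 - t/2) * (1 - 1/(2*t))) / (sqrt (1 + (1 - t/2)^2 / t) * sqrt (1 + (1 - 1/(2*t))^2 * t)))"
proof -
  define A :: R3 where "A = (0,0,0)"
  define B :: R3 where "B = (1,1,0)"
  define C :: R3 where "C = (0,1,ln (sqrt t))"
  define g1 :: "real \<Rightarrow> R3" where "g1 = (\<lambda>s. (s, s, 0))"
  define q2 where "q2 = 1 / (2*t)"
  define x0 where "x0 = 1 - 1/(2*t)"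
  define R2 where "R2 = sqrt (q2^2 + 1^2)"
  have R2': "R2 = sqrt ((-x0)^2 + (1 / sqrt t)^2)"
  proof -
    have "q2^2 + 1^2 = (-x0)^2 + (1 / sqrt t)^2" unfolding q2_def x0_def using t
      by (simp add: power2_eq_square field_simps)
    then show ?thesis unfolding R2_def by simp
  qed
  note E20 = endpt[OF _ R2_def] and E21 = endpt[OF _ R2']
  have R2p: "R2 > 0" using E20 by simp
  define s20 where "s20 = artanh (q2 / R2)"
  define s21 where "s21 = artanh ((-x0) / R2)"
  define d2 where "d2 = s21 - s20"
  define g2 :: "real \<Rightarrow> R3" where
    "g2 = (\<lambda>s. (x0 + R2 * tanh (s20 + d2 * s), 1, - ln (1 - tanh (s20 + d2 * s) ^ 2) / 2 - ln R2))"
  have th20: "tanh s20 = q2 / R2" "1 - tanh s20 ^ 2 = 1 / R2^2" unfolding s20_def using E20 by simp_all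
  have th21: "tanh s21 = -x0 / R2" "1 - tanh s21 ^ 2 = (1/sqrt t)^2 / R2^2" unfolding s21_def using E21 t by simp_all
  have s21': "s20 + d2 = s21" unfolding d2_def by simp
  have d2n: "d2 < 0"
  proof -
    have "-x0 < q2" unfolding x0_def q2_def by simp
    then have "-x0 / R2 < q2 / R2" using R2p divide_strict_right_mono by blast
    then have "tanh s21 < tanh s20" using th20 th21 by simp
    then show ?thesis unfolding d2_def by simp
  qed
  note AY = arc_y[OF R2p, where xc=x0 and yc=1 and sa=s20 and d=d2, folded g2_def]
  define q3 where "q3 = 1 - t/2"
  define R3 where "R3 = sqrt (q3^2 + (sqrt t)^2)"
  have R3': "R3 = sqrt ((-(t/2))^2 + 1^2)"
  proof -
    have "q3^2 + (sqrt t)^2 = (-(t/2))^2 + 1^2" unfolding q3_def using t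
      by (simp add: power2_eq_square field_simps)
    then show ?thesis unfolding R3_def by simp
  qed
  note E30 = endpt[OF _ R3_def] and E31 = endpt[OF _ R3']
  have R3p: "R3 > 0" using E31 by simp
  define s30 where "s30 = artanh (q3 / R3)"
  define s31 where "s31 = artanh ((-(t/2)) / R3)"
  define d3 where "d3 = s31 - s30"
  define g3 :: "real \<Rightarrow> R3" where
    "g3 = (\<lambda>s. (0, t/2 + R3 * tanh (s30 + d3 * s), ln R3 + ln (1 - tanh (s30 + d3 * s) ^ 2) / 2))"
  have th30: "tanh s30 = q3 / R3" "1 - tanh s30 ^ 2 = (sqrt t)^2 / R3^2" unfolding s30_def using E30 t by simp_all
  have th31: "tanh s31 = -(t/2) / R3" "1 - tanh s31 ^ 2 = 1 / R3^2" unfolding s31_def using E31 by simp_all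
  have s31': "s30 + d3 = s31" unfolding d3_def by simp
  have d3n: "d3 < 0"
  proof -
    have "-(t/2) < q3" unfolding q3_def by simp
    then have "-(t/2) / R3 < q3 / R3" using R3p divide_strict_right_mono by blast
    then have "tanh s31 < tanh s30" using th30 th31 by simp
    then show ?thesis unfolding d3_def by simp
  qed
  note AX = arc_x[OF R3p, where xc=0 and yc="t/2" and sa=s30 and d=d3, folded g3_def]
  note G1 = geod_components[where X="\<lambda>s. s" and Y="\<lambda>s. s" and Z="\<lambda>s. 0" and X'="\<lambda>s. 1" and Y'="\<lambda>s. 1"
    and Z'="\<lambda>s. 0" and X''="\<lambda>s. 0" and Y''="\<lambda>s. 0" and Z''="\<lambda>s. 0", folded g1_def]
  have G1': "sol_geodesic_on g1 0 1" "side_tangent g1 0 = (1,1,0)" "side_tangent g1 1 = (1,1,0)"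
    by (rule G1; (auto intro!: derivative_eq_intros simp: sol_geodesic_acc_def)?)+
  have g20: "g2 0 = B" unfolding g2_def B_def using th20 R2p
    by (simp add: q2_def x0_def zend_y[OF R2p, of 1, simplified])
  have z21: "- ln (1 - tanh s21 ^ 2) / 2 - ln R2 = ln (sqrt t)"
  proof -
    have "- ln (1 - tanh s21 ^ 2) / 2 - ln R2 = - ln (1 / sqrt t)"
      unfolding th21(2) by (rule zend_y[OF R2p]) (use t in simp)
    then show ?thesis using t by (simp add: ln_div)
  qed
  have g21: "g2 1 = C" unfolding g2_def C_def using th21(1) R2p s21' z21
    by (simp add: x0_def)
  have z30: "ln R3 + ln (1 - tanh s30 ^ 2) / 2 = ln (sqrt t)"
    unfolding th30(2) by (rule zend_x[OF R3p]) (use t in simp)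
  have g30: "g3 0 = C" unfolding g3_def C_def using th30(1) R3p z30
    by (simp add: q3_def)
  have g31: "g3 1 = A" unfolding g3_def A_def using th31 R3p s31'
    by (simp add: zend_x[OF R3p, of 1, simplified])
  have g10: "g1 0 = A" and g11: "g1 1 = B" unfolding g1_def A_def B_def by simp_all
  obtain r where r: "r = sqrt t" by blast
  have rp: "r > 0" using r t by simp
  have tr: "t = r * r" using r t by simp
  have T2a: "side_tangent g2 0 = (-d2/R2) *\<^sub>R (-1, 0, -(1/(2*t)))"
  proof -
    have "side_tangent g2 0 = (R2 * d2 * (1/R2^2), 0, d2 * (q2/R2))" using AY(2) th20 by simp
    then show ?thesis using R2p by (simp add: q2_def field_simps power2_eq_square)
  qed
  have T2b: "- side_tangent g2 1 = (-d2/(R2 * sqrt t)) *\<^sub>R (1/sqrt t, 0, -(1 - 1/(2*t)) * sqrt t)"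
  proof -
    have "side_tangent g2 1 = (R2 * d2 * ((1/sqrt t)^2 / R2^2), 0, d2 * (-x0/R2))" using AY(3) th21 s21' by simp
    then show ?thesis unfolding x0_def unfolding r[symmetric] tr using R2p rp by (simp add: field_simps power2_eq_square)
  qed
  have T3a: "side_tangent g3 0 = (-d3 * sqrt t/R3) *\<^sub>R (0, -sqrt t, (1 - t/2)/sqrt t)"
  proof -
    have "side_tangent g3 0 = (0, R3 * d3 * ((sqrt t)^2 / R3^2), - d3 * (q3/R3))" using AX(2) th30 by simp
    then show ?thesis unfolding q3_def unfolding r[symmetric] tr using R3p rp by (simp add: field_simps power2_eq_square)
  qed
  have T3b: "- side_tangent g3 1 = (-d3/R3) *\<^sub>R (0, 1, t/2)"
  proof -
    have "side_tangent g3 1 = (0, R3 * d3 * (1 / R3^2), - d3 * (-(t/2)/R3))" using AX(3) th31 s31' by simp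
    then show ?thesis using R3p by (simp add: field_simps power2_eq_square)
  qed
  have tri: "sol_geodesic_triangle A B C g1 g2 g3"
    unfolding sol_geodesic_triangle_def
    using G1'(1) g10 g11 AY(1) g20 g21 AX(1) g30 g31 not_common[of A C B]
    by (auto simp: A_def B_def C_def)
  have c1: "-d2/R2 > 0" using d2n R2p by (simp add: divide_pos_pos divide_neg_pos mult_neg_pos)
  have c2: "-d2/(R2 * sqrt t) > 0" using d2n R2p t by (simp add: divide_pos_pos divide_neg_pos mult_neg_pos)
  have c3: "-d3 * sqrt t/R3 > 0" using d3n R3p t by (simp add: divide_pos_pos divide_neg_pos mult_neg_pos)
  have c4: "-d3/R3 > 0" using d3n R3p by (simp add: divide_pos_pos divide_neg_pos mult_neg_pos)
  have sum: "sol_angle_sum A B C g1 g2 g3 = arccos (1 / (sqrt 2 * sqrt (1 + (t/2)^2))) + arccos (1 / (sqrt (1 + (1/(2*t))^2) * sqrt 2))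
       + arccos (- ((1 - t/2) * (1 - 1/(2*t))) / (sqrt (1 + (1 - t/2)^2 / t) * sqrt (1 + (1 - 1/(2*t))^2 * t)))"
    unfolding sol_angle_sum_def T2a T2b T3a T3b G1'(2,3) sol_angle_scale1[OF c1] sol_angle_scale1[OF c3]
      sol_angle_scale2[OF c2] sol_angle_scale2[OF c4]
    using angA[of t] angB[of t] angC[OF t] by (simp add: A_def B_def C_def)
  show ?thesis using tri sum by blast
qed


theorem theorem3p5:
  shows "(\<exists>A B C g1 g2 g3. sol_geodesic_triangle A B C g1 g2 g3 \<and> sol_angle_sum A B C g1 g2 g3 > pi)
       \<and> (\<exists>A B C g1 g2 g3. sol_geodesic_triangle A B C g1 g2 g3 \<and> sol_angle_sum A B C g1 g2 g3 < pi)
       \<and> (\<exists>A B C g1 g2 g3. sol_geodesic_triangle A B C g1 g2 g3 \<and> sol_angle_sum A B C g1 g2 g3 = pi)"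
proof (intro conjI)
  have P1: "Pt 1 < 0" unfolding Pt_def by simp
  have P6: "Pt 6 > 0" unfolding Pt_def by simp
  show "\<exists>A B C g1 g2 g3. sol_geodesic_triangle A B C g1 g2 g3 \<and> sol_angle_sum A B C g1 g2 g3 > pi"
  proof -
    have "(1::real) > 0" by simp
    from triangle[OF this] angle_sum_sign(1)[OF this P1] show ?thesis by (metis (no_types, lifting))
  qed
  show "\<exists>A B C g1 g2 g3. sol_geodesic_triangle A B C g1 g2 g3 \<and> sol_angle_sum A B C g1 g2 g3 < pi"
  proof -
    have "(6::real) > 0" by simp
    from triangle[OF this] angle_sum_sign(2)[OF this P6] show ?thesis by (metis (no_types, lifting))
  qed
  have "continuous_on {1..6} Pt" unfolding Pt_def by (intro continuous_intros)
  then obtain t0 where t0: "1 \<le> t0" "t0 \<le> 6" "Pt t0 = 0"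
    using IVT'[of Pt 1 0 6] P1 P6 by auto
  then have t0p: "t0 > 0" by simp
  show "\<exists>A B C g1 g2 g3. sol_geodesic_triangle A B C g1 g2 g3 \<and> sol_angle_sum A B C g1 g2 g3 = pi"
    using triangle[OF t0p] angle_sum_sign(3)[OF t0p t0(3)] by (metis (no_types, lifting))
qed

end
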